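(* Let $M\subseteq[r]^d$ be a dot array satisfying (P2), (P3) and (P4). Then $M$ is a totally rankable dot array of rank $r$.
   Context: $[r]=\{0,\dots,r\}$; a dot array is a subset of $[r]^d$, partially ordered coordinatewise with meet $\mathbf x\wedge\mathbf y=(\min(x_i,y_i))_i$. Rankability. Let $\mathrm{rk}_iP$ be one less than the number of distinct $i$-th coordinates among elements of $P$. $P$ is rankable of rank $s$ if $\mathrm{rk}_iP=s$ for all $i$. $P$ is totally rankable if every principal subarray $P[\mathbf x]=\{\mathbf y\in P:\mathbf y\succeq\mathbf x\}$, $\mathbf x\in[r]^d$, is rankable. Its rank is the rank of $P$ itself. Subarrays. A $[k]^d$-subarray of $M$ is $M\cap(A_1\times\dots\times A_d)$ with $A_i\subseteq[r]$ and $|A_i|=k+1$. It is regarded as a dot array in $[k]^d$ via the order-preserving bijections $A_i\to[k]$. Properties of a dot array $M\subseteq[r]^d$: (P1) $M$ is closed under $\wedge$. (P2) for every $j$ and every $c\in[r]$ some $\mathbf w\in M$ has $w_j=c$. (P3) every set $S$ of $r+2$ elements of $M$ contains a subset $S'$ (with at least two elements) such that for every $i$ the value $\min\{x_i:\mathbf x\in S'\}$ is attained by at least two elements of $S'$. (P4) (recursive in $r$; vacuous for $r=0$) for every $0\le k\le r-1$ and every set $N$ of $k+1$ elements of $M$, there is a $[k]^d$-subarray $M'$ of $M$ containing $N$ which, as a dot array in $[k]^d$, satisfies (P1), (P2), (P3), (P4) with $r$ replaced by $k$. *)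

theory Defs
  imports Main
begin

text \<open>Points of [r]^d are functions nat => nat, with coordinates 0..d-1 in [r]
  and value 0 at all indices >= d (extensional representation).\<close>

type_synonym point = "nat \<Rightarrow> nat"

definition grid :: "nat \<Rightarrow> nat \<Rightarrow> point set" where
  "grid r d = {x. (\<forall>i<d. x i \<le> r) \<and> (\<forall>i\<ge>d. x i = 0)}"

definition dot_array :: "nat \<Rightarrow> nat \<Rightarrow> point set \<Rightarrow> bool" where
  "dot_array r d P \<longleftrightarrow> P \<subseteq> grid r d"

definition meet :: "nat \<Rightarrow> point \<Rightarrow> point \<Rightarrow> point" where
  "meet d x y = (\<lambda>i. min (x i) (y i))"

text \<open>rk_i P = (number of distinct i-th coordinates) - 1, as an integer (empty P gives -1).\<close>
definition rk :: "nat \<Rightarrow> point set \<Rightarrow> int" where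
  "rk i P = int (card ((\<lambda>x. x i) ` P)) - 1"

definition rankable_of_rank :: "nat \<Rightarrow> point set \<Rightarrow> int \<Rightarrow> bool" where
  "rankable_of_rank d P s \<longleftrightarrow> (\<forall>i<d. rk i P = s)"

definition rankable :: "nat \<Rightarrow> point set \<Rightarrow> bool" where
  "rankable d P \<longleftrightarrow> (\<exists>s. rankable_of_rank d P s)"

definition principal :: "nat \<Rightarrow> point set \<Rightarrow> point \<Rightarrow> point set" where
  "principal d P x = {y \<in> P. \<forall>i<d. x i \<le> y i}"

definition totally_rankable :: "nat \<Rightarrow> nat \<Rightarrow> point set \<Rightarrow> bool" where
  "totally_rankable r d P \<longleftrightarrow> (\<forall>x \<in> grid r d. rankable d (principal d P x))"

definition totally_rankable_of_rank :: "nat \<Rightarrow> nat \<Rightarrow> point set \<Rightarrow> int \<Rightarrow> bool" where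
  "totally_rankable_of_rank r d P s \<longleftrightarrow> totally_rankable r d P \<and> rankable_of_rank d P s"

definition P1 :: "nat \<Rightarrow> point set \<Rightarrow> bool" where
  "P1 d M \<longleftrightarrow> (\<forall>x\<in>M. \<forall>y\<in>M. meet d x y \<in> M)"

definition P2 :: "nat \<Rightarrow> nat \<Rightarrow> point set \<Rightarrow> bool" where
  "P2 r d M \<longleftrightarrow> (\<forall>j<d. \<forall>c\<le>r. \<exists>w\<in>M. w j = c)"

definition P3 :: "nat \<Rightarrow> nat \<Rightarrow> point set \<Rightarrow> bool" where
  "P3 r d M \<longleftrightarrow> (\<forall>S. S \<subseteq> M \<and> card S = r + 2 \<longrightarrow>
     (\<exists>S'. S' \<subseteq> S \<and> 2 \<le> card S' \<and>
        (\<forall>i<d. 2 \<le> card {x\<in>S'. x i = Min ((\<lambda>y. y i) ` S')})))"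

text \<open>Relabelling of a subarray: A i (i<d) are the chosen coordinate sets; the
  order-preserving bijection A i -> [k] sends a to the number of elements of A i below a.\<close>
definition relabel :: "nat \<Rightarrow> (nat \<Rightarrow> nat set) \<Rightarrow> point \<Rightarrow> point" where
  "relabel d A y = (\<lambda>i. if i < d then card {a \<in> A i. a < y i} else 0)"

definition subarray_sets :: "nat \<Rightarrow> nat \<Rightarrow> point set \<Rightarrow> (nat \<Rightarrow> nat set) \<Rightarrow> point set" where
  "subarray_sets r d M A = {y \<in> M. \<forall>i<d. y i \<in> A i}"

definition is_sub_choice :: "nat \<Rightarrow> nat \<Rightarrow> nat \<Rightarrow> (nat \<Rightarrow> nat set) \<Rightarrow> bool" where
  "is_sub_choice r d k A \<longleftrightarrow> (\<forall>i<d. A i \<subseteq> {0..r} \<and> card (A i) = k + 1)"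

function P4 :: "nat \<Rightarrow> nat \<Rightarrow> point set \<Rightarrow> bool" where
  "P4 r d M \<longleftrightarrow> (\<forall>k<r. \<forall>N. N \<subseteq> M \<and> card N = k + 1 \<longrightarrow>
     (\<exists>A. is_sub_choice r d k A \<and> N \<subseteq> subarray_sets r d M A \<and>
        (let M' = relabel d A ` subarray_sets r d M A in
           P1 d M' \<and> P2 k d M' \<and> P3 k d M' \<and> P4 k d M')))"
  by auto
termination by (relation "measure (\<lambda>(r, d, M). r)") auto

end

theory Submission
  imports Defs
begin

declare P4.simps[simp del]

lemma rel_strict:
  fixes a b :: nat
  assumes "finite B" "a \<in> B" "a < b"
  shows "card {c\<in>B. c < a} < card {c\<in>B. c < b}"
proof (rule psubset_card_mono)
  show "finite {c\<in>B. c < b}" using assms by auto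
  show "{c\<in>B. c < a} \<subset> {c\<in>B. c < b}" using assms by auto
qed

lemma rel_le_imp:
  fixes a b :: nat
  assumes "finite B" "a \<in> B" "b \<in> B" "card {c\<in>B. c < a} \<le> card {c\<in>B. c < b}"
  shows "a \<le> b"
proof (rule ccontr)
  assume "\<not> a \<le> b"
  hence "b < a" by simp
  from rel_strict[OF assms(1) assms(3) this] assms(4) show False by simp
qed

lemma rel_inj:
  fixes B V :: "nat set"
  assumes "finite B" "V \<subseteq> B"
  shows "inj_on (\<lambda>v. card {c\<in>B. c < v}) V"
proof (rule inj_onI)
  fix a b assume ab: "a \<in> V" "b \<in> V" "card {c\<in>B. c < a} = card {c\<in>B. c < b}"
  have "a \<le> b" using rel_le_imp[of B a b] assms ab by auto
  moreover have "b \<le> a" using rel_le_imp[of B b a] assms ab by auto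
  ultimately show "a = b" by simp
qed

lemma rel_bound:
  fixes a :: nat
  assumes "card B = k + 1" "a \<in> B"
  shows "card {c\<in>B. c < a} \<le> k"
proof -
  have fin: "finite B" using assms(1) card.infinite by fastforce
  have "{c\<in>B. c < a} \<subseteq> B - {a}" by auto
  hence "card {c\<in>B. c < a} \<le> card (B - {a})" using fin by (intro card_mono) auto
  also have "\<dots> = k" using assms fin by simp
  finally show ?thesis .
qed

lemma key:
  assumes "dot_array r d M" "P2 r d M" "P3 r d M" "P4 r d M" "i < d" "j < d"
  shows "card ((\<lambda>z. z i) ` principal d M x) \<le> card ((\<lambda>z. z j) ` principal d M x)"
  using assms
proof (induction r arbitrary: d M x i j rule: less_induct)
  case (less r)
  define P where "P = principal d M x"
  have PM: "P \<subseteq> M" by (auto simp: P_def principal_def)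
  have Mg: "M \<subseteq> grid r d" using less.prems(1) by (simp add: dot_array_def)
  have Vsub: "\<And>l. l < d \<Longrightarrow> (\<lambda>z. z l) ` M \<subseteq> {0..r}" using Mg by (auto simp: grid_def)
  define Vi where "Vi = (\<lambda>z. z i) ` P"
  have Vi_sub: "Vi \<subseteq> {0..r}" using Vsub[OF less.prems(5)] PM by (auto simp: Vi_def)
  have finVi: "finite Vi" using Vi_sub finite_subset by blast
  have finVjP: "finite ((\<lambda>z. z j) ` P)" using Vsub[OF less.prems(6)] PM
    by (meson finite_atLeastAtMost finite_subset image_mono order_trans)
  define n where "n = card Vi"
  have nle: "n \<le> r + 1" unfolding n_def using card_mono[OF _ Vi_sub] by simp
  have "\<forall>c\<in>Vi. \<exists>z\<in>P. z i = c" by (auto simp: Vi_def)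
  then obtain f where f: "\<forall>c\<in>Vi. f c \<in> P \<and> f c i = c" by metis
  define N where "N = f ` Vi"
  have injf: "inj_on f Vi" by (rule inj_onI) (metis f)
  have cardN: "card N = n" unfolding N_def n_def using card_image[OF injf] .
  have finN: "finite N" unfolding N_def using finVi by simp
  have NP: "N \<subseteq> P" using f by (auto simp: N_def)
  have NVi: "(\<lambda>z. z i) ` N = Vi" using f by (force simp: N_def image_image)
  have injN: "inj_on (\<lambda>z. z i) N" by (rule inj_onI) (metis N_def f imageE)
  show ?case
  proof (cases "n = 0")
    case True then show ?thesis unfolding P_def[symmetric] Vi_def[symmetric] n_def[symmetric] by simp
  next
    case n0: False
    show ?thesis
    proof (cases "n = r + 1")
      case True
      have allP: "w \<in> P" if wM: "w \<in> M" for w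
      proof (rule ccontr)
        assume wP: "w \<notin> P"
        then obtain l where l: "l < d" "w l < x l" using wM by (auto simp: P_def principal_def not_le)
        have wN: "w \<notin> N" using NP wP by auto
        define S where "S = insert w N"
        have cS: "card S = r + 2" using wN finN cardN True by (simp add: S_def)
        have SM: "S \<subseteq> M" using NP PM wM by (auto simp: S_def)
        obtain S' where S': "S' \<subseteq> S" "2 \<le> card S'"
          "\<forall>i<d. 2 \<le> card {x\<in>S'. x i = Min ((\<lambda>y. y i) ` S')}"
          using less.prems(3)[unfolded P3_def, rule_format, OF conjI[OF SM cS]] by blast
        have finS': "finite S'" using S'(1) finN finite_subset by (auto simp: S_def)
        show False
        proof (cases "w \<in> S'")
          case True
          define m where "m = Min ((\<lambda>y. y l) ` S')"
          have "m \<le> w l" unfolding m_def using True finS' by simp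
          have "{z\<in>S'. z l = m} \<subseteq> {w}"
          proof
            fix z assume z: "z \<in> {z\<in>S'. z l = m}"
            have "z \<notin> P" using z \<open>m \<le> w l\<close> l by (auto simp: P_def principal_def)
            hence "z \<notin> N" using NP by auto
            thus "z \<in> {w}" using z S'(1) by (auto simp: S_def)
          qed
          hence "card {z\<in>S'. z l = m} \<le> 1" using card_mono[of "{w}"] by fastforce
          thus False using S'(3) l(1) unfolding m_def by fastforce
        next
          case False
          hence S'N: "S' \<subseteq> N" using S'(1) by (auto simp: S_def)
          define m where "m = Min ((\<lambda>y. y i) ` S')"
          have "card {z\<in>S'. z i = m} \<le> Suc 0"
            using finS' S'N injN by (subst card_le_Suc0_iff_eq) (auto simp: inj_on_def)
          thus False using S'(3) less.prems(5) unfolding m_def by fastforce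
        qed
      qed
      hence "P = M" using PM by auto
      have "{0..r} \<subseteq> (\<lambda>z. z j) ` M" using less.prems(2) less.prems(6) unfolding P2_def by force
      hence "card {0..r} \<le> card ((\<lambda>z. z j) ` P)" using finVjP \<open>P = M\<close> by (intro card_mono) auto
      thus ?thesis using True unfolding P_def[symmetric] Vi_def[symmetric] n_def[symmetric] by simp
    next
      case False
      define k where "k = n - 1"
      have kr: "k < r" and nk: "n = k + 1" using False nle n0 by (auto simp: k_def)
      have NM: "N \<subseteq> M" using NP PM by auto
      have cN: "card N = k + 1" using cardN nk by simp
      have "\<exists>A. is_sub_choice r d k A \<and> N \<subseteq> subarray_sets r d M A \<and>
        (let M' = relabel d A ` subarray_sets r d M A in
           P1 d M' \<and> P2 k d M' \<and> P3 k d M' \<and> P4 k d M')"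
        using iffD1[OF P4.simps[of r d M] less.prems(4), rule_format, OF kr conjI[OF NM cN]] .
      then obtain A where A: "is_sub_choice r d k A" "N \<subseteq> subarray_sets r d M A"
        and M'P: "P2 k d (relabel d A ` subarray_sets r d M A)"
          "P3 k d (relabel d A ` subarray_sets r d M A)"
          "P4 k d (relabel d A ` subarray_sets r d M A)"
        by (auto simp: Let_def)
      define M' where "M' = relabel d A ` subarray_sets r d M A"
      have cardA: "\<And>l. l < d \<Longrightarrow> card (A l) = k + 1" using A(1) by (simp add: is_sub_choice_def)
      have finA: "\<And>l. l < d \<Longrightarrow> finite (A l)" using cardA card.infinite by fastforce
      have dM': "dot_array k d M'"
        unfolding dot_array_def M'_def
      proof
        fix z' assume "z' \<in> relabel d A ` subarray_sets r d M A"
        then obtain z where z: "z \<in> subarray_sets r d M A" "z' = relabel d A z" by auto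
        show "z' \<in> grid k d"
          using z rel_bound[OF cardA] by (auto simp: grid_def relabel_def subarray_sets_def)
      qed
      define N' where "N' = relabel d A ` N"
      define x' where "x' = (\<lambda>l. Min ((\<lambda>z. z l) ` N'))"
      define P' where "P' = principal d M' x'"
      have finN': "finite N'" using finN by (simp add: N'_def)
      have neN': "N' \<noteq> {}" using n0 cardN by (auto simp: N'_def)
      have N'P': "N' \<subseteq> P'"
        unfolding P'_def principal_def x'_def using A(2) finN' by (auto simp: M'_def N'_def)
      have IH: "card ((\<lambda>z. z i) ` P') \<le> card ((\<lambda>z. z j) ` P')"
        unfolding P'_def using less.IH[OF kr dM' M'P[folded M'_def] less.prems(5,6)] .
      have Vsub': "\<And>l. l < d \<Longrightarrow> (\<lambda>z. z l) ` P' \<subseteq> {0..k}"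
        using dM' by (auto simp: dot_array_def grid_def P'_def principal_def)
      have ViA: "Vi \<subseteq> A i" using A(2) NVi less.prems(5) by (auto simp: subarray_sets_def)
      have "(\<lambda>z. z i) ` N' = (\<lambda>v. card {c\<in>A i. c < v}) ` Vi"
        using less.prems(5) by (auto simp: N'_def relabel_def NVi[symmetric] image_image)
      hence "card ((\<lambda>z. z i) ` N') = n"
        using card_image[OF rel_inj[OF finA[OF less.prems(5)] ViA]] by (simp add: n_def)
      hence c1: "n \<le> card ((\<lambda>z. z i) ` P')"
        using N'P' Vsub'[OF less.prems(5)] by (metis card_mono finite_atLeastAtMost finite_subset image_mono)
      have sub2: "(\<lambda>z. z j) ` P' \<subseteq> (\<lambda>v. card {c\<in>A j. c < v}) ` ((\<lambda>z. z j) ` P)"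
      proof
        fix v assume "v \<in> (\<lambda>z. z j) ` P'"
        then obtain z' where z': "z' \<in> P'" "v = z' j" by auto
        then obtain z where z: "z \<in> subarray_sets r d M A" "z' = relabel d A z"
          and ge: "\<forall>l<d. x' l \<le> z' l" by (auto simp: P'_def principal_def M'_def)
        have "z \<in> P"
          unfolding P_def principal_def
        proof (intro CollectI conjI allI impI)
          show "z \<in> M" using z by (simp add: subarray_sets_def)
          fix l assume l: "l < d"
          have "x' l \<in> (\<lambda>z. z l) ` N'" unfolding x'_def using finN' neN' by simp
          then obtain q where q: "q \<in> N" "x' l = relabel d A q l" by (auto simp: N'_def)
          have qA: "q l \<in> A l" using q(1) A(2) l by (auto simp: subarray_sets_def)
          have zA: "z l \<in> A l" using z(1) l by (auto simp: subarray_sets_def)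
          have "card {c\<in>A l. c < q l} \<le> card {c\<in>A l. c < z l}"
            using ge l q(2) z(2) by (auto simp: relabel_def)
          hence "q l \<le> z l" using rel_le_imp[OF finA[OF l] qA zA] by simp
          moreover have "x l \<le> q l" using q(1) NP l by (auto simp: P_def principal_def)
          ultimately show "x l \<le> z l" by simp
        qed
        thus "v \<in> (\<lambda>v. card {c\<in>A j. c < v}) ` ((\<lambda>z. z j) ` P)"
          using z' z less.prems(6) by (auto simp: relabel_def)
      qed
      have "card ((\<lambda>z. z j) ` P') \<le> card ((\<lambda>z. z j) ` P)"
        using card_mono[OF finite_imageI[OF finVjP] sub2] card_image_le[OF finVjP, of "\<lambda>v. card {c\<in>A j. c < v}"] by linarith
      thus ?thesis using c1 IH unfolding P_def[symmetric] Vi_def[symmetric] n_def[symmetric] by simp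
    qed
  qed
qed

theorem mainTheorem4:
  fixes r d :: nat and M :: "point set"
  assumes "dot_array r d M"
    and "P2 r d M" and "P3 r d M" and "P4 r d M"
  shows "totally_rankable_of_rank r d M (int r)"
  unfolding totally_rankable_of_rank_def
proof
  show "totally_rankable r d M"
    unfolding totally_rankable_def rankable_def rankable_of_rank_def
  proof (intro ballI)
    fix x assume "x \<in> grid r d"
    show "\<exists>s. \<forall>i<d. rk i (principal d M x) = s"
    proof (intro exI allI impI)
      fix i assume i: "i < d"
      hence "0 < d" by simp
      have "card ((\<lambda>z. z i) ` principal d M x) = card ((\<lambda>z. z 0) ` principal d M x)"
        using key[where x=x, OF assms i \<open>0<d\<close>] key[where x=x, OF assms \<open>0<d\<close> i] by simp
      thus "rk i (principal d M x) = rk 0 (principal d M x)" by (simp add: rk_def)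
    qed
  qed
  show "rankable_of_rank d M (int r)"
    unfolding rankable_of_rank_def
  proof (intro allI impI)
    fix i assume i: "i < d"
    have "(\<lambda>z. z i) ` M = {0..r}"
    proof
      show "(\<lambda>z. z i) ` M \<subseteq> {0..r}" using assms(1) i by (auto simp: dot_array_def grid_def)
      show "{0..r} \<subseteq> (\<lambda>z. z i) ` M" using assms(2) i unfolding P2_def by force
    qed
    thus "rk i M = int r" by (simp add: rk_def)
  qed
qed

end
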